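(* Let $A$ be a uniform algebra and let $\theta : A \to M_n(\mathbb{C})$ be a continuous unital homomorphism. If $\|\theta\| > 1$, then for every continuous linear functional $\beta$ on $A$, $$\|\theta + \beta I\| \ge \|\theta\|,$$ where $\theta+\beta I : A\to M_n(\mathbb{C})$ denotes the linear map $f \mapsto \theta(f)+\beta(f)I$.
   Context: A uniform algebra is a norm-closed subalgebra of $C(X)$, for $X$ a compact Hausdorff space, containing the constants, with the supremum norm. $M_n(\mathbb{C})$ carries the operator norm, and norms of maps are operator norms. *)

theory Defs
  imports "HOL-Analysis.Analysis"
begin

text \<open>The compact Hausdorff space X is modelled as a type 'x with t2_space and compact UNIV;
  elements of C(X) are functions 'x => complex that are continuous.\<close>

definition sup_norm :: "('x \<Rightarrow> complex) \<Rightarrow> real" where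
  "sup_norm f = (SUP x. cmod (f x))"

definition uniform_algebra :: "('x::topological_space \<Rightarrow> complex) set \<Rightarrow> bool" where
  "uniform_algebra A \<longleftrightarrow>
     (\<forall>f\<in>A. continuous_on UNIV f) \<and>
     (\<forall>c. (\<lambda>x. c) \<in> A) \<and>
     (\<forall>f\<in>A. \<forall>g\<in>A. (\<lambda>x. f x + g x) \<in> A \<and> (\<lambda>x. f x * g x) \<in> A) \<and>
     (\<forall>c. \<forall>f\<in>A. (\<lambda>x. c * f x) \<in> A) \<and>
     (\<forall>F g. (\<forall>k. F k \<in> A) \<and> uniform_limit UNIV F g sequentially \<longrightarrow> g \<in> A)"

definition cmat_scale :: "complex \<Rightarrow> complex^'n^'m \<Rightarrow> complex^'n^'m" where
  "cmat_scale c M = (\<chi> i j. c * M $ i $ j)"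

definition mat_opnorm :: "complex^'n^'n \<Rightarrow> real" where
  "mat_opnorm M = onorm (\<lambda>v::complex^'n. M *v v)"

definition map_norm :: "('x \<Rightarrow> complex) set \<Rightarrow> (('x \<Rightarrow> complex) \<Rightarrow> complex^'n^'n) \<Rightarrow> real" where
  "map_norm A \<Phi> = (SUP f \<in> {f \<in> A. sup_norm f \<le> 1}. mat_opnorm (\<Phi> f))"

definition cont_unital_hom ::
  "('x \<Rightarrow> complex) set \<Rightarrow> (('x \<Rightarrow> complex) \<Rightarrow> complex^'n^'n) \<Rightarrow> bool" where
  "cont_unital_hom A \<theta> \<longleftrightarrow>
     (\<forall>f\<in>A. \<forall>g\<in>A. \<theta> (\<lambda>x. f x + g x) = \<theta> f + \<theta> g) \<and>
     (\<forall>c. \<forall>f\<in>A. \<theta> (\<lambda>x. c * f x) = cmat_scale c (\<theta> f)) \<and>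
     (\<forall>f\<in>A. \<forall>g\<in>A. \<theta> (\<lambda>x. f x * g x) = \<theta> f ** \<theta> g) \<and>
     \<theta> (\<lambda>x. 1) = mat 1 \<and>
     (\<exists>C. \<forall>f\<in>A. mat_opnorm (\<theta> f) \<le> C * sup_norm f)"

definition cont_lin_functional :: "('x \<Rightarrow> complex) set \<Rightarrow> (('x \<Rightarrow> complex) \<Rightarrow> complex) \<Rightarrow> bool" where
  "cont_lin_functional A \<beta> \<longleftrightarrow>
     (\<forall>f\<in>A. \<forall>g\<in>A. \<beta> (\<lambda>x. f x + g x) = \<beta> f + \<beta> g) \<and>
     (\<forall>c. \<forall>f\<in>A. \<beta> (\<lambda>x. c * f x) = c * \<beta> f) \<and>
     (\<exists>C. \<forall>f\<in>A. cmod (\<beta> f) \<le> C * sup_norm f)"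

end

theory Submission
  imports Defs
begin


lemma sqc: "(complex_of_real (cmod z))^2 = z * cnj z" "complex_of_real (cmod z) * complex_of_real (cmod z) = z * cnj z"
   "cnj z * z = z * cnj z" "cnj z * (z * a) = z * cnj z * a"
  using complex_norm_square[of z] by (simp_all add: power2_eq_square mult.commute)

definition hp :: "complex^'n \<Rightarrow> complex^'n \<Rightarrow> complex" where
  "hp x y = (\<Sum>i\<in>UNIV. x$i * cnj (y$i))"

lemma hp_add_left: "hp (a + b) c = hp a c + hp b c"
  by (simp add: hp_def distrib_right sum.distrib)
lemma hp_add_right: "hp a (b + c) = hp a b + hp a c"
  by (simp add: hp_def distrib_left sum.distrib)
lemma hp_smult_left: "hp (s *s a) c = s * hp a c"
  by (simp add: hp_def sum_distrib_left mult.assoc)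
lemma hp_smult_right: "hp a (s *s c) = cnj s * hp a c"
  by (simp add: hp_def sum_distrib_left mult.assoc mult.left_commute)
lemma hp_cnj: "cnj (hp a b) = hp b a"
  by (simp add: hp_def mult.commute)
lemma hp_self: "hp x x = complex_of_real ((norm x)^2)"
proof -
  have "(norm x)^2 = (\<Sum>i\<in>UNIV. (cmod (x$i))^2)"
    by (simp add: norm_vec_def L2_set_def sum_nonneg)
  then show ?thesis by (simp add: hp_def sqc)
qed
lemma inner_hp: "inner x y = Re (hp x y)"
  by (simp add: hp_def inner_vec_def inner_complex_def)

lemma norm_smult: "norm (s *s x) = cmod s * norm (x::complex^'n)"
proof -
  have "complex_of_real ((norm (s *s x))^2) = complex_of_real ((cmod s * norm x)^2)"
    unfolding hp_self[symmetric] hp_smult_left hp_smult_right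
    by (simp add: hp_self power_mult_distrib sqc(1) mult_ac)
  then have "(norm (s *s x))^2 = (cmod s * norm x)^2" using of_real_eq_iff by blast
  then show ?thesis by (simp add: power2_eq_iff_nonneg)
qed

lemma hp_cs: "cmod (hp x y) \<le> norm x * norm y"
proof (cases "hp x y = 0")
  case True then show ?thesis by simp
next
  case False
  define z where "z = cnj (sgn (hp x y))"
  have "hp (z *s x) y = complex_of_real (cmod (hp x y))"
    using False by (simp add: hp_smult_left z_def sgn_div_norm scaleR_conv_of_real divide_simps sqc(1,2,3))
  then have "cmod (hp x y) = inner (z *s x) y" by (simp add: inner_hp)
  also have "\<dots> \<le> norm (z *s x) * norm y" by (rule norm_cauchy_schwarz)
  also have "norm (z *s x) = norm x" using False by (simp add: norm_smult z_def norm_sgn)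
  finally show ?thesis .
qed

lemma norm_add_sq: "(norm (a + b))^2 = (norm a)^2 + 2 * Re (hp a b) + (norm (b::complex^'n))^2"
proof -
  have e: "hp b a = cnj (hp a b)" by (simp add: hp_cnj)
  have "complex_of_real ((norm (a+b))^2) = hp a a + hp a b + hp b a + hp b b"
    by (simp only: hp_self[symmetric] hp_add_left hp_add_right add_ac)
  also have "\<dots> = hp a a + (hp a b + cnj (hp a b)) + hp b b" by (simp only: e add_ac)
  also have "\<dots> = complex_of_real ((norm a)^2 + 2 * Re (hp a b) + (norm b)^2)"
    by (simp only: complex_add_cnj hp_self of_real_add)
  finally show ?thesis using of_real_eq_iff by blast
qed

lemma first_order:
  assumes r: "r > 0" and h: "\<And>w. cmod w \<le> r \<Longrightarrow> Re (cnj w * \<alpha>) \<le> C * (cmod w)^2"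
  shows "\<alpha> = 0"
proof (rule ccontr)
  assume a: "\<alpha> \<noteq> 0"
  define C' where "C' = max C 1"
  define t where "t = min (r / cmod \<alpha>) (1 / (2*C'))"
  have C'p: "C' \<ge> 1" by (simp add: C'_def)
  have tp: "t > 0" using a r C'p by (simp add: t_def)
  have "cmod (complex_of_real t * \<alpha>) \<le> r"
    using tp a by (simp add: norm_mult t_def) (metis a min.cobounded1 mult.commute pos_le_divide_eq zero_less_norm_iff)
  from h[OF this] have "Re (cnj (complex_of_real t * \<alpha>) * \<alpha>) \<le> C * (cmod (complex_of_real t * \<alpha>))^2" .
  moreover have "Re (cnj (complex_of_real t * \<alpha>) * \<alpha>) = t * (cmod \<alpha>)^2"
  proof -
    have "cnj (complex_of_real t * \<alpha>) * \<alpha> = complex_of_real t * (\<alpha> * cnj \<alpha>)" by (simp add: mult_ac)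
    also have "\<dots> = complex_of_real (t * (cmod \<alpha>)^2)" by (simp only: complex_norm_square[symmetric] of_real_mult)
    finally show ?thesis by (metis Re_complex_of_real)
  qed
  moreover have "(cmod (complex_of_real t * \<alpha>))^2 = t^2 * (cmod \<alpha>)^2"
    using tp by (simp add: norm_mult power_mult_distrib)
  ultimately have 1: "t * (cmod \<alpha>)^2 \<le> C * (t^2 * (cmod \<alpha>)^2)" by simp
  define a where "a = (cmod \<alpha>)^2"
  have ap: "a > 0" using a by (simp add: a_def)
  have "(t*a) * 1 \<le> (t*a) * (C*t)" using 1 by (simp add: a_def power2_eq_square mult_ac)
  then have ct: "1 \<le> C * t" using ap tp by (simp add: mult_le_cancel_left_pos)
  have "C * t \<le> C' * t" using tp by (intro mult_right_mono) (auto simp: C'_def)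
  moreover have "t \<le> 1 / (2*C')" by (simp add: t_def)
  then have "C' * t \<le> 1/2" using C'p by (simp add: field_simps)
  ultimately show False using ct by linarith
qed


lemma mv_smult: "M *v (c *s v) = c *s (M *v (v::complex^'n))"
  by (simp add: vec_eq_iff matrix_vector_mult_def sum_distrib_left mult_ac)

lemma cms_mv: "cmat_scale c M *v v = c *s (M *v (v::complex^'n))"
  by (simp add: vec_eq_iff matrix_vector_mult_def cmat_scale_def sum_distrib_left mult_ac)

lemma tendsto_mv:
  fixes f :: "'a \<Rightarrow> complex^'n^'m" and g :: "'a \<Rightarrow> complex^'n"
  assumes "(f \<longlongrightarrow> X) F" "(g \<longlongrightarrow> z) F"
  shows "((\<lambda>x. f x *v g x) \<longlongrightarrow> X *v z) F"
  unfolding matrix_vector_mult_def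
  by (intro tendsto_intros assms)

lemma tendsto_smult:
  fixes f :: "'a \<Rightarrow> complex^'n"
  assumes "(f \<longlongrightarrow> z) F"
  shows "((\<lambda>x. c *s f x) \<longlongrightarrow> c *s z) F"
  by (rule vec_tendstoI) (auto intro!: tendsto_intros assms)

lemma tendsto_hp:
  fixes f g :: "'a \<Rightarrow> complex^'n"
  assumes "(f \<longlongrightarrow> a) F" "(g \<longlongrightarrow> b) F"
  shows "((\<lambda>x. hp (f x) (g x)) \<longlongrightarrow> hp a b) F"
  unfolding hp_def by (intro tendsto_intros assms)

lemma continuous_on_mv:
  fixes f :: "'a::topological_space \<Rightarrow> complex^'n^'m" and g :: "'a \<Rightarrow> complex^'n"
  assumes "continuous_on S f" "continuous_on S g"
  shows "continuous_on S (\<lambda>x. f x *v g x)"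
  using assms unfolding continuous_on_def by (blast intro: tendsto_mv)

lemma hp_axis: "hp (axis j (1::complex)) (axis j 1) = 1"
  by (simp add: hp_def axis_def if_distrib[of "\<lambda>x. _ * x"] if_distrib[of cnj] sum.delta sum.delta' cong: if_cong)

lemma norm_axis_c: "norm (axis j (1::complex)) = 1"
proof -
  have "complex_of_real ((norm (axis j (1::complex)))^2) = 1" using hp_axis hp_self by metis
  then have "(norm (axis j (1::complex)))^2 = 1" by (metis of_real_eq_1_iff)
  then show ?thesis by (simp add: power2_eq_1_iff)
qed

lemma mat_entry: "Y $ i $ j = (Y *v axis j (1::complex)) $ i"
  by (simp add: matrix_vector_mult_def axis_def if_distrib[of "\<lambda>x. _ * x"] cong: if_cong)

lemma norm_vec_le_sum: "norm (x::'a::real_normed_vector^'n) \<le> (\<Sum>i\<in>UNIV. norm (x$i))"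
  by (simp add: norm_vec_def L2_set_le_sum)

lemma mat_norm_bound:
  fixes Y :: "complex^'n^'m"
  assumes "\<And>z. norm (Y *v z) \<le> D * norm z"
  shows "norm Y \<le> of_nat CARD('m) * (of_nat CARD('n) * D)"
proof -
  have e: "norm (Y $ i $ j) \<le> D" for i j
  proof -
    have "norm (Y $ i $ j) \<le> norm (Y *v axis j (1::complex))"
      unfolding mat_entry[of Y i j] by (rule Finite_Cartesian_Product.norm_nth_le)
    also have "\<dots> \<le> D" using assms[of "axis j 1"] by (simp add: norm_axis_c)
    finally show ?thesis .
  qed
  have "norm Y \<le> (\<Sum>i\<in>UNIV. norm (Y$i))" by (rule norm_vec_le_sum)
  also have "\<dots> \<le> (\<Sum>i\<in>(UNIV::'m set). (\<Sum>j\<in>(UNIV::'n set). norm (Y$i$j)))"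
    by (intro sum_mono norm_vec_le_sum)
  also have "\<dots> \<le> (\<Sum>i\<in>(UNIV::'m set). (\<Sum>j\<in>(UNIV::'n set). D))"
    by (intro sum_mono e)
  finally show ?thesis by simp
qed

lemma sup_norm_ge:
  fixes f :: "'x::topological_space \<Rightarrow> complex"
  assumes "compact (UNIV::'x set)" "continuous_on UNIV f"
  shows "cmod (f x) \<le> sup_norm f"
proof -
  have "compact ((\<lambda>x. cmod (f x)) ` UNIV)"
    by (intro compact_continuous_image continuous_intros assms)
  then have "bdd_above ((\<lambda>x. cmod (f x)) ` UNIV)"
    by (simp add: bounded_imp_bdd_above compact_imp_bounded)
  from cSUP_upper[OF UNIV_I this, of x] show ?thesis unfolding sup_norm_def .
qed

lemma sup_norm_le:
  assumes "\<And>x. cmod (f x) \<le> b"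
  shows "sup_norm f \<le> b"
  unfolding sup_norm_def by (rule cSUP_least) (auto intro: assms)

lemma poly_bound:
  fixes z w :: complex
  assumes z: "cmod z \<le> 1" and w: "cmod w \<le> 1/2"
  shows "cmod (z - w + cnj w * (z * z)) \<le> 1 + 2 * (cmod w)^2"
proof -
  define h where "h = - w + cnj w * (z * z)"
  have e: "z - w + cnj w * (z * z) = z + h" by (simp add: h_def)
  have n: "(cmod (z + h))^2 = (cmod z)^2 + 2 * Re (cnj z * h) + (cmod h)^2"
    by (simp only: cmod_power2) (simp add: power2_eq_square algebra_simps)
  have re: "Re (cnj z * h) = ((cmod z)^2 - 1) * Re (cnj w * z)"
    by (simp only: cmod_power2) (simp add: h_def power2_eq_square algebra_simps)
  have a: "\<bar>Re (cnj w * z)\<bar> \<le> cmod w"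
    using abs_Re_le_cmod[of "cnj w * z"] z
    by (metis complex_mod_cnj mult_left_le norm_ge_zero norm_mult order_trans)
  have z2: "(cmod z)^2 \<le> 1" using z by (simp add: power_le_one)
  have "2 * Re (cnj z * h) \<le> 2 * ((1 - (cmod z)^2) * cmod w)"
  proof -
    have "Re (cnj z * h) \<le> \<bar>((cmod z)^2 - 1)\<bar> * \<bar>Re (cnj w * z)\<bar>" unfolding re abs_mult[symmetric] by simp
    also have "\<dots> \<le> (1 - (cmod z)^2) * cmod w" using z2 a by (simp add: mult_left_mono)
    finally show ?thesis by simp
  qed
  moreover have hb: "cmod h \<le> 2 * cmod w"
  proof -
    have "cmod h \<le> cmod w + cmod w * (cmod z * cmod z)"
      unfolding h_def using norm_triangle_ineq4[of "-w" "- (cnj w * (z*z))"]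
      by (simp add: norm_mult norm_minus_commute)
    also have "\<dots> \<le> cmod w + cmod w * 1" using z
      by (intro add_left_mono mult_left_mono) (auto simp: mult_le_one)
    finally show ?thesis by simp
  qed
  then have "(cmod h)^2 \<le> 4 * (cmod w)^2"
    using power_mono[OF hb norm_ge_zero, of 2] by (simp add: power_mult_distrib)
  moreover have "(cmod z)^2 + 2 * ((1 - (cmod z)^2) * cmod w) \<le> 1"
  proof -
    have "2 * ((1 - (cmod z)^2) * cmod w) \<le> (1 - (cmod z)^2)"
      using z2 w mult_left_mono[of "2*cmod w" 1 "1 - (cmod z)^2"] by (simp add: mult_ac)
    then show ?thesis by simp
  qed
  ultimately have "(cmod (z + h))^2 \<le> 1 + 4 * (cmod w)^2" unfolding n by linarith
  also have "\<dots> \<le> (1 + 2 * (cmod w)^2)^2" by (simp add: power2_eq_square algebra_simps)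
  finally have "(cmod (z + h))^2 \<le> (1 + 2 * (cmod w)^2)^2" .
  then show ?thesis unfolding e by (rule power2_le_imp_le) simp
qed



theorem theorem4p1:
  fixes A :: "('x::t2_space \<Rightarrow> complex) set"
    and \<theta> :: "('x \<Rightarrow> complex) \<Rightarrow> complex^'n::finite^'n"
    and \<beta> :: "('x \<Rightarrow> complex) \<Rightarrow> complex"
  assumes "compact (UNIV :: 'x set)"
    and "uniform_algebra A"
    and "cont_unital_hom A \<theta>"
    and "map_norm A \<theta> > 1"
    and "cont_lin_functional A \<beta>"
  shows "map_norm A (\<lambda>f. \<theta> f + cmat_scale (\<beta> f) (mat 1)) \<ge> map_norm A \<theta>"
proof -
  note cpt = assms(1)
  have contA: "\<And>f. f \<in> A \<Longrightarrow> continuous_on UNIV f"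
    and constA: "\<And>c. (\<lambda>x. c) \<in> A"
    and addA: "\<And>f g. f \<in> A \<Longrightarrow> g \<in> A \<Longrightarrow> (\<lambda>x. f x + g x) \<in> A"
    and mulA: "\<And>f g. f \<in> A \<Longrightarrow> g \<in> A \<Longrightarrow> (\<lambda>x. f x * g x) \<in> A"
    and smulA: "\<And>c f. f \<in> A \<Longrightarrow> (\<lambda>x. c * f x) \<in> A"
    using assms(2) unfolding uniform_algebra_def by blast+
  have hadd: "\<And>f g. f \<in> A \<Longrightarrow> g \<in> A \<Longrightarrow> \<theta> (\<lambda>x. f x + g x) = \<theta> f + \<theta> g"
    and hsmul: "\<And>c f. f \<in> A \<Longrightarrow> \<theta> (\<lambda>x. c * f x) = cmat_scale c (\<theta> f)"
    and hmul: "\<And>f g. f \<in> A \<Longrightarrow> g \<in> A \<Longrightarrow> \<theta> (\<lambda>x. f x * g x) = \<theta> f ** \<theta> g"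
    and hone: "\<theta> (\<lambda>x. 1) = mat 1"
    using assms(3) unfolding cont_unital_hom_def by blast+
  obtain C\<theta> where C\<theta>: "\<And>f. f \<in> A \<Longrightarrow> mat_opnorm (\<theta> f) \<le> C\<theta> * sup_norm f"
    using assms(3) unfolding cont_unital_hom_def by blast
  obtain C\<beta> where C\<beta>: "\<And>f. f \<in> A \<Longrightarrow> cmod (\<beta> f) \<le> C\<beta> * sup_norm f"
    using assms(5) unfolding cont_lin_functional_def by blast
  have badd: "\<And>f g. f \<in> A \<Longrightarrow> g \<in> A \<Longrightarrow> \<beta> (\<lambda>x. f x + g x) = \<beta> f + \<beta> g"
    using assms(5) unfolding cont_lin_functional_def by blast

  define B where "B = {f \<in> A. sup_norm f \<le> 1}"
  have ptB: "cmod (f x) \<le> 1" and snB: "0 \<le> sup_norm f" "sup_norm f \<le> 1" if "f \<in> B" for f x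
  proof -
    have fA: "f \<in> A" and s1: "sup_norm f \<le> 1" using that B_def by auto
    have "cmod (f x) \<le> sup_norm f" using sup_norm_ge[OF cpt contA[OF fA]] .
    moreover have "cmod (f x) \<ge> 0" by simp
    ultimately show "cmod (f x) \<le> 1" "0 \<le> sup_norm f" "sup_norm f \<le> 1" using s1 by linarith+
  qed
  define D where "D = max C\<theta> 0"
  define D\<beta> where "D\<beta> = max C\<beta> 0"
  have opB: "mat_opnorm (\<theta> f) \<le> D" if "f \<in> B" for f
  proof -
    have "mat_opnorm (\<theta> f) \<le> C\<theta> * sup_norm f" using C\<theta> that B_def by blast
    also have "\<dots> \<le> D * sup_norm f" using snB[OF that] by (intro mult_right_mono) (auto simp: D_def)
    also have "\<dots> \<le> D" using snB[OF that] by (intro mult_left_le) (auto simp: D_def)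
    finally show ?thesis .
  qed
  have bB: "cmod (\<beta> f) \<le> D\<beta>" if "f \<in> B" for f
  proof -
    have "cmod (\<beta> f) \<le> C\<beta> * sup_norm f" using C\<beta> that B_def by blast
    also have "\<dots> \<le> D\<beta> * sup_norm f" using snB[OF that] by (intro mult_right_mono) (auto simp: D\<beta>_def)
    also have "\<dots> \<le> D\<beta>" using snB[OF that] by (intro mult_left_le) (auto simp: D\<beta>_def)
    finally show ?thesis .
  qed
  have mvB: "norm (\<theta> f *v z) \<le> D * norm z" if "f \<in> B" for f z
  proof -
    have "norm (\<theta> f *v z) \<le> mat_opnorm (\<theta> f) * norm z"
      unfolding mat_opnorm_def by (rule onorm) simp
    also have "\<dots> \<le> D * norm z" using opB[OF that] by (intro mult_right_mono) auto
    finally show ?thesis .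
  qed
  define S where "S = \<theta> ` B"
  define K where "K = closure S"
  have bS: "bounded S"
    unfolding bounded_iff S_def using mat_norm_bound[OF mvB] by blast
  have cK: "compact K" unfolding K_def using bS by simp
  have oneB: "(\<lambda>x. 1) \<in> B" unfolding B_def using constA by (auto intro: sup_norm_le)
  define T where "T = K \<times> sphere (0::complex^'n) 1"
  have cT: "compact T" unfolding T_def using cK by (intro compact_Times compact_sphere)
  have neT: "T \<noteq> {}"
  proof -
    have "\<theta> (\<lambda>x. 1) \<in> S" unfolding S_def using oneB by (rule imageI)
    then have "\<theta> (\<lambda>x. 1) \<in> K" unfolding K_def using closure_subset[of S] by (rule subsetD[rotated])
    moreover have "axis undefined (1::complex) \<in> sphere 0 1" by (simp add: norm_axis_c)
    ultimately show ?thesis unfolding T_def by blast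
  qed
  have contT: "continuous_on T (\<lambda>p. norm (fst p *v snd p))"
    by (intro continuous_intros continuous_on_mv)
  obtain p where pT: "p \<in> T" and pmax: "\<And>q. q \<in> T \<Longrightarrow> norm (fst q *v snd q) \<le> norm (fst p *v snd p)"
    using continuous_attains_sup[OF cT neT contT] by blast
  define X where "X = fst p"
  define u where "u = snd p"
  define m where "m = norm (X *v u)"
  have XK: "X \<in> K" and nu: "norm u = 1" using pT unfolding T_def X_def u_def by auto
  have P: "norm (Y *v z) \<le> m * norm z" if "Y \<in> K" for Y z
  proof (cases "z = 0")
    case True then show ?thesis by simp
  next
    case False
    define z' where "z' = (1 / norm z) *\<^sub>R z"
    have "(Y, z') \<in> T" unfolding T_def z'_def using that False by simp
    then have "norm (Y *v z') \<le> m" using pmax unfolding m_def X_def u_def by fastforce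
    moreover have "Y *v z' = (1 / norm z) *\<^sub>R (Y *v z)"
      unfolding z'_def by (rule linear_scale[OF bounded_linear.linear[OF matrix_vector_mul_bounded_linear]])
    ultimately have "(1 / norm z) * norm (Y *v z) \<le> m" by simp
    then show ?thesis using False by (simp add: field_simps)
  qed
  have SK: "S \<subseteq> K" unfolding K_def by (rule closure_subset)
  have cm: "map_norm A \<theta> \<le> m"
    unfolding map_norm_def B_def[symmetric]
  proof (rule cSUP_least)
    show "B \<noteq> {}" using oneB by blast
  next
    fix f assume "f \<in> B"
    then have "\<theta> f \<in> K" using SK S_def by blast
    then show "mat_opnorm (\<theta> f) \<le> m" unfolding mat_opnorm_def by (intro onorm_le P)
  qed
  have m1: "m > 1" using cm assms(4) by linarith

  have m0: "m > 0" using m1 by linarith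
  define y where "y = X *v u"
  have ny: "norm y = m" unfolding y_def m_def ..
  have nXy: "norm (X *v y) \<le> m * m" using P[OF XK, of y] ny by simp
  define \<alpha>1 where "\<alpha>1 = hp y (X *v y) - complex_of_real (m^2) * hp u y"
  have a1: "\<alpha>1 = 0"
  proof (rule first_order[where r=1 and C="m^4/2"])
    fix s :: complex assume "cmod s \<le> 1"
    have ineq: "norm (X *v (u + s *s y)) \<le> m * norm (u + s *s y)" using P[OF XK] .
    have e1: "X *v (u + s *s y) = y + s *s (X *v y)" by (simp add: matrix_vector_right_distrib mv_smult y_def)
    have "(norm (y + s *s (X *v y)))^2 \<le> (m * norm (u + s *s y))^2"
      using ineq e1 by (metis power_mono norm_ge_zero)
    then have E: "m^2 + 2 * Re (cnj s * hp y (X *v y)) + (cmod s)^2 * (norm (X *v y))^2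
        \<le> m^2 * (1 + 2 * Re (cnj s * hp u y) + (cmod s)^2 * m^2)"
      by (simp add: norm_add_sq hp_smult_right norm_smult ny nu power_mult_distrib)
    have r: "Re (cnj s * \<alpha>1) = Re (cnj s * hp y (X *v y)) - m^2 * Re (cnj s * hp u y)"
      by (simp add: \<alpha>1_def algebra_simps)
    have x: "m^2 * (1 + 2 * Re (cnj s * hp u y) + (cmod s)^2 * m^2) = m^2 + 2 * (m^2 * Re (cnj s * hp u y)) + (cmod s)^2 * m^4"
      by (simp add: algebra_simps power2_eq_square power4_eq_xxxx)
    have "0 \<le> (cmod s)^2 * (norm (X *v y))^2" by simp
    moreover have "m^4/2 * (cmod s)^2 = ((cmod s)^2 * m^4)/2" by simp
    ultimately show "Re (cnj s * \<alpha>1) \<le> m^4/2 * (cmod s)^2" using E x r by linarith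
  qed simp
  have st2: "norm (y + (-w *s u + cnj w *s (X *v y))) \<le> m * (1 + 2*(cmod w)^2)" if w: "cmod w \<le> 1/2" for w
  proof -
    define R where "R = 1 + 2*(cmod w)^2"
    have Rp: "R > 0" unfolding R_def by (simp add: add_pos_nonneg)
    define F where "F = (\<lambda>Y::complex^'n^'n. Y *v u + (-w *s u + cnj w *s (Y *v (Y *v u))))"
    have FS: "norm (F Y) \<le> m * R" if "Y \<in> S" for Y
    proof -
      obtain g where gB: "g \<in> B" and Y: "Y = \<theta> g" using \<open>Y \<in> S\<close> S_def by blast
      have gA: "g \<in> A" using gB B_def by blast
      define g2 where "g2 = (\<lambda>x. g x * g x)"
      define c1 where "c1 = (\<lambda>x::'x. -w * (1::complex))"
      define q where "q = (\<lambda>x. cnj w * g2 x)"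
      define h0 where "h0 = (\<lambda>x. g x + c1 x)"
      define h1 where "h1 = (\<lambda>x. h0 x + q x)"
      define h where "h = (\<lambda>x. complex_of_real (1/R) * h1 x)"
      have g2A: "g2 \<in> A" unfolding g2_def using mulA[OF gA gA] .
      have c1A: "c1 \<in> A" unfolding c1_def using smulA[OF constA[of 1], of "-w"] by simp
      have qA: "q \<in> A" unfolding q_def by (rule smulA[OF g2A])
      have h0A: "h0 \<in> A" unfolding h0_def by (rule addA[OF gA c1A])
      have h1A: "h1 \<in> A" unfolding h1_def by (rule addA[OF h0A qA])
      have hA: "h \<in> A" unfolding h_def by (rule smulA[OF h1A])
      have tg2: "\<theta> g2 = \<theta> g ** \<theta> g" unfolding g2_def using hmul[OF gA gA] .
      have tc1: "\<theta> c1 = cmat_scale (-w) (mat 1)" unfolding c1_def using hsmul[OF constA[of 1], of "-w"] hone by simp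
      have tq: "\<theta> q = cmat_scale (cnj w) (\<theta> g2)" unfolding q_def by (rule hsmul[OF g2A])
      have th0: "\<theta> h0 = \<theta> g + \<theta> c1" unfolding h0_def by (rule hadd[OF gA c1A])
      have th1: "\<theta> h1 = \<theta> h0 + \<theta> q" unfolding h1_def by (rule hadd[OF h0A qA])
      have th: "\<theta> h = cmat_scale (complex_of_real (1/R)) (\<theta> h1)" unfolding h_def by (rule hsmul[OF h1A])
      have thu: "\<theta> h *v u = complex_of_real (1/R) *s F Y"
        unfolding th th1 th0 tc1 tq tg2 F_def Y
        by (simp add: cms_mv matrix_vector_mult_add_rdistrib matrix_vector_mul_assoc)
      have hB: "h \<in> B"
      proof -
        have "cmod (h x) \<le> 1" for x
        proof -
          have "h x = complex_of_real (1/R) * (g x - w + cnj w * (g x * g x))"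
            by (simp add: h_def h1_def h0_def c1_def q_def g2_def)
          then have "cmod (h x) = (1/R) * cmod (g x - w + cnj w * (g x * g x))"
            using Rp by (simp add: norm_mult norm_divide)
          also have "\<dots> \<le> (1/R) * R" unfolding R_def
            using poly_bound[OF ptB[OF gB] w] Rp by (intro mult_left_mono) (auto simp: R_def)
          finally show ?thesis using Rp by simp
        qed
        then show ?thesis unfolding B_def using hA by (auto intro: sup_norm_le)
      qed
      have "\<theta> h \<in> K" using hB SK S_def by blast
      then have "norm (\<theta> h *v u) \<le> m" using P[of "\<theta> h" u] nu by simp
      then have "(1/R) * norm (F Y) \<le> m" unfolding thu norm_smult using Rp by (simp add: norm_divide)
      then show ?thesis using Rp by (simp add: field_simps)
    qed
    obtain Ys where Ys: "\<And>n. Ys n \<in> S" and lim: "Ys \<longlonglongrightarrow> X"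
      using XK unfolding K_def closure_sequential by blast
    have "(\<lambda>n. F (Ys n)) \<longlonglongrightarrow> F X"
      unfolding F_def by (intro tendsto_add tendsto_mv tendsto_smult tendsto_const lim)
    then have "norm (F X) \<le> m * R"
      by (rule tendsto_upperbound[OF tendsto_norm]) (auto intro!: always_eventually FS Ys)
    then show ?thesis unfolding F_def R_def y_def .
  qed
  define \<alpha>2 where "\<alpha>2 = cnj (hp y (X *v y)) - hp y u"
  have a2: "\<alpha>2 = 0"
  proof (rule first_order[where r="1/2" and C="5/2 * m^2"])
    fix w :: complex assume w: "cmod w \<le> 1/2"
    define d where "d = -w *s u + cnj w *s (X *v y)"
    have "(norm (y + d))^2 \<le> (m * (1 + 2*(cmod w)^2))^2"
      using st2[OF w] unfolding d_def by (metis power_mono norm_ge_zero)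
    then have E: "m^2 + 2 * Re (hp y d) + (norm d)^2 \<le> m^2 * (1 + 2*(cmod w)^2)^2"
      by (simp add: norm_add_sq ny power_mult_distrib)
    have e: "hp y d = cnj (-w) * hp y u + cnj (cnj w) * hp y (X *v y)"
      unfolding d_def by (simp only: hp_add_right hp_smult_right)
    have ee: "Re (cnj (-w) * a + cnj (cnj w) * b) = Re (cnj w * (cnj b - a))" for a b
      by (simp add: algebra_simps)
    have hd: "Re (hp y d) = Re (cnj w * \<alpha>2)"
      unfolding e \<alpha>2_def by (rule ee)
    define W where "W = (cmod w)^2"
    have W0: "W \<ge> 0" unfolding W_def by simp
    have "(cmod w)^2 \<le> (1/2)^2" using w by (intro power_mono) auto
    then have W4: "W \<le> 1/4" unfolding W_def by (simp add: power2_eq_square)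
    have "W * W \<le> W * (1/4)" using W0 W4 by (intro mult_left_mono)
    then have "m^2 * (4*W + 4*(W*W)) \<le> m^2 * (5 * W)" by (intro mult_left_mono) auto
    moreover have "m^2 * (1 + 2*(cmod w)^2)^2 = m^2 + m^2 * (4*W + 4*(W*W))"
      by (simp add: W_def power2_eq_square algebra_simps)
    moreover have "0 \<le> (norm d)^2" by simp
    ultimately show "Re (cnj w * \<alpha>2) \<le> 5/2 * m^2 * (cmod w)^2" using E hd unfolding W_def by linarith
  qed simp
  have hyu: "hp y u = 0"
  proof -
    have "hp y (X *v y) = complex_of_real (m^2) * hp u y" using a1 unfolding \<alpha>1_def by simp
    moreover have "hp y u = cnj (hp y (X *v y))" using a2 unfolding \<alpha>2_def by simp
    ultimately have "hp y u = complex_of_real (m^2) * hp y u" by (simp add: hp_cnj)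
    then have "(complex_of_real (m^2) - 1) * hp y u = 0" by (simp add: algebra_simps)
    moreover have "complex_of_real (m^2) - 1 \<noteq> 0"
    proof
      assume "complex_of_real (m^2) - 1 = 0"
      then have "m^2 = 1" by (metis eq_iff_diff_eq_0 of_real_eq_1_iff)
      then show False using m1 by (simp add: power2_eq_1_iff) 
    qed
    ultimately show ?thesis by simp
  qed
  have huy: "hp u y = 0" using hyu hp_cnj[of y u] by simp
  define \<Phi> where "\<Phi> = (\<lambda>f. \<theta> f + cmat_scale (\<beta> f) (mat 1))"
  define M where "M = map_norm A \<Phi>"
  have \<Phi>v: "\<Phi> f *v z = \<theta> f *v z + \<beta> f *s z" for f z
    by (simp add: \<Phi>_def cms_mv matrix_vector_mult_add_rdistrib)
  have bdd: "bdd_above ((\<lambda>f. mat_opnorm (\<Phi> f)) ` B)"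
  proof (rule bdd_aboveI2)
    fix f assume fB: "f \<in> B"
    show "mat_opnorm (\<Phi> f) \<le> D + D\<beta>" unfolding mat_opnorm_def
    proof (rule onorm_le)
      fix z
      have "norm (\<Phi> f *v z) \<le> norm (\<theta> f *v z) + norm (\<beta> f *s z)" unfolding \<Phi>v by (rule norm_triangle_ineq)
      also have "\<dots> \<le> D * norm z + D\<beta> * norm z" unfolding norm_smult
        using mvB[OF fB, of z] bB[OF fB] by (intro add_mono mult_right_mono) auto
      finally show "norm (\<Phi> f *v z) \<le> (D + D\<beta>) * norm z" by (simp add: algebra_simps)
    qed
  qed
  have ZM: "mat_opnorm (\<Phi> f) \<le> M" if "f \<in> B" for f
    unfolding M_def map_norm_def B_def[symmetric] by (rule cSUP_upper[OF that bdd])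
  have Sb: "cmod (hp (Y *v u) y) \<le> m * M" if "Y \<in> S" for Y
  proof -
    obtain g where gB: "g \<in> B" and Y: "Y = \<theta> g" using \<open>Y \<in> S\<close> S_def by blast
    have "hp (\<Phi> g *v u) y = hp (Y *v u) y" unfolding \<Phi>v Y by (simp add: hp_add_left hp_smult_left huy)
    moreover have "cmod (hp (\<Phi> g *v u) y) \<le> norm (\<Phi> g *v u) * m" using hp_cs ny by metis
    moreover have "norm (\<Phi> g *v u) \<le> mat_opnorm (\<Phi> g)"
      unfolding mat_opnorm_def using onorm[OF matrix_vector_mul_bounded_linear, of "\<Phi> g" u] nu by simp
    moreover have "mat_opnorm (\<Phi> g) \<le> M" by (rule ZM[OF gB])
    ultimately have "norm (\<Phi> g *v u) * m \<le> M * m" "cmod (hp (Y *v u) y) \<le> norm (\<Phi> g *v u) * m"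
      using m0 by (auto intro: mult_right_mono)
    then have "cmod (hp (Y *v u) y) \<le> M * m" by linarith
    then show ?thesis by (simp add: mult.commute)
  qed
  obtain Ys where Ys: "\<And>n. Ys n \<in> S" and lim: "Ys \<longlonglongrightarrow> X"
    using XK unfolding K_def closure_sequential by blast
  have "(\<lambda>n. cmod (hp (Ys n *v u) y)) \<longlonglongrightarrow> cmod (hp (X *v u) y)"
    by (intro tendsto_norm tendsto_hp tendsto_mv lim tendsto_const)
  then have "cmod (hp (X *v u) y) \<le> m * M"
    by (rule tendsto_upperbound) (auto intro!: always_eventually Sb Ys)
  moreover have "cmod (hp (X *v u) y) = m * m"
    unfolding y_def[symmetric] hp_self ny norm_of_real using m0 by (simp add: power2_eq_square)
  ultimately have "m \<le> M" using m0 by simp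
  then show ?thesis using cm unfolding M_def \<Phi>_def by linarith
qed

end
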